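(* The quaternionic Grothendieck constant is at most the complex Grothendieck constant: $K_G^{\mathbb{H}}\le K_G^{\mathbb{C}}$.
   Context: $\mathbb{H}$ denotes the quaternions, with conjugation $\bar a$, modulus $|a|=\sqrt{a\bar a}$ and real part $\Re a$. A right quaternionic Hilbert space $\mathcal{H}$ is a right $\mathbb{H}$-vector space with a map $\langle\cdot,\cdot\rangle:\mathcal{H}\times\mathcal{H}\to\mathbb{H}$ satisfying $\langle y,x\rangle=\overline{\langle x,y\rangle}$, $\langle xa+yb,z\rangle=\bar a\langle x,z\rangle+\bar b\langle y,z\rangle$, $\langle z,xa+yb\rangle=\langle z,x\rangle a+\langle z,y\rangle b$, and $\langle x,x\rangle>0$ for $x\neq 0$; $\|x\|=\sqrt{\langle x,x\rangle}$. For $M=(M_{ij})\in\mathbb{H}^{m\times n}$ define $\|M\|_{\infty,1,\mathbb{H}}=\max\{|\sum_{i,j}M_{ij}\bar\varepsilon_i\delta_j| : \varepsilon_i,\delta_j\in\mathbb{H},\ |\varepsilon_i|=|\delta_j|=1\}$ and $\|M\|_{G,\mathbb{H}}=\sup\{|\sum_{i,j}M_{ij}\langle x_i,y_j\rangle| : x_i,y_j\in\mathcal{H},\ \|x_i\|=\|y_j\|=1\}$, the supremum being over all right quaternionic Hilbert spaces $\mathcal{H}$ and unit vectors in them. $K_G^{\mathbb{H}}$ is the smallest constant $K$ such that $\|M\|_{G,\mathbb{H}}\le K\|M\|_{\infty,1,\mathbb{H}}$ for all $m,n$ and all $M\in\mathbb{H}^{m\times n}$. $K_G^{\mathbb{C}}$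 is the classical complex Grothendieck constant, defined analogously with $\mathbb{C}$ in place of $\mathbb{H}$ (complex unit scalars, complex Hilbert spaces). *)

theory Defs
  imports "HOL-Analysis.Analysis"
begin

text \<open>A quaternion Quat a b c d stands for a + b i + c j + d k.\<close>
datatype quat = Quat (qre: real) (qi: real) (qj: real) (qk: real)

definition qzero :: quat where "qzero = Quat 0 0 0 0"

definition qadd :: "quat \<Rightarrow> quat \<Rightarrow> quat" where
  "qadd p q = Quat (qre p + qre q) (qi p + qi q) (qj p + qj q) (qk p + qk q)"

text \<open>Hamilton product (i^2 = j^2 = k^2 = ijk = -1).\<close>
definition qmult :: "quat \<Rightarrow> quat \<Rightarrow> quat" where
  "qmult p q = Quat
     (qre p * qre q - qi p * qi q - qj p * qj q - qk p * qk q)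
     (qre p * qi q + qi p * qre q + qj p * qk q - qk p * qj q)
     (qre p * qj q - qi p * qk q + qj p * qre q + qk p * qi q)
     (qre p * qk q + qi p * qj q - qj p * qi q + qk p * qre q)"

definition qcnj :: "quat \<Rightarrow> quat" where
  "qcnj q = Quat (qre q) (- qi q) (- qj q) (- qk q)"

text \<open>Modulus |a| = sqrt(a conj(a)) (a conj(a) is real).\<close>
definition qnorm :: "quat \<Rightarrow> real" where
  "qnorm q = sqrt (qre (qmult q (qcnj q)))"

definition qsum :: "('a \<Rightarrow> quat) \<Rightarrow> 'a set \<Rightarrow> quat" where
  "qsum f A = Quat (\<Sum>a\<in>A. qre (f a)) (\<Sum>a\<in>A. qi (f a)) (\<Sum>a\<in>A. qj (f a)) (\<Sum>a\<in>A. qk (f a))"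

text \<open>Vectors of H^d are functions nat => quat, only coordinates < d matter.
  Inner product <x,y> = sum_k conj(x_k) y_k (conjugate-linear in the first,
  right-linear in the second argument).\<close>
definition qinner :: "nat \<Rightarrow> (nat \<Rightarrow> quat) \<Rightarrow> (nat \<Rightarrow> quat) \<Rightarrow> quat" where
  "qinner d x y = qsum (\<lambda>k. qmult (qcnj (x k)) (y k)) {..<d}"

definition qvnorm :: "nat \<Rightarrow> (nat \<Rightarrow> quat) \<Rightarrow> real" where
  "qvnorm d x = sqrt (qre (qinner d x x))"

definition norm_inf1_H :: "nat \<Rightarrow> nat \<Rightarrow> (nat \<Rightarrow> nat \<Rightarrow> quat) \<Rightarrow> real" where
  "norm_inf1_H m n M = Sup {qnorm (qsum (\<lambda>(i,j). qmult (qmult (M i j) (qcnj (eps i))) (dlt j))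
                                    ({..<m} \<times> {..<n})) | eps dlt.
       (\<forall>i<m. qnorm (eps i) = 1) \<and> (\<forall>j<n. qnorm (dlt j) = 1)}"

definition norm_G_H :: "nat \<Rightarrow> nat \<Rightarrow> (nat \<Rightarrow> nat \<Rightarrow> quat) \<Rightarrow> real" where
  "norm_G_H m n M = Sup {qnorm (qsum (\<lambda>(i,j). qmult (M i j) (qinner d (x i) (y j)))
                                    ({..<m} \<times> {..<n})) | d x y.
       (\<forall>i<m. qvnorm d (x i) = 1) \<and> (\<forall>j<n. qvnorm d (y j) = 1)}"

definition KG_H :: ereal where
  "KG_H = Inf {ereal K | K. \<forall>m n (M :: nat \<Rightarrow> nat \<Rightarrow> quat).
                 norm_G_H m n M \<le> K * norm_inf1_H m n M}"

definition cinner :: "nat \<Rightarrow> (nat \<Rightarrow> complex) \<Rightarrow> (nat \<Rightarrow> complex) \<Rightarrow> complex" where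
  "cinner d x y = (\<Sum>k<d. cnj (x k) * y k)"

definition cvnorm :: "nat \<Rightarrow> (nat \<Rightarrow> complex) \<Rightarrow> real" where
  "cvnorm d x = sqrt (Re (cinner d x x))"

definition norm_inf1_C :: "nat \<Rightarrow> nat \<Rightarrow> (nat \<Rightarrow> nat \<Rightarrow> complex) \<Rightarrow> real" where
  "norm_inf1_C m n M = Sup {cmod (\<Sum>i<m. \<Sum>j<n. M i j * cnj (eps i) * dlt j) | eps dlt.
       (\<forall>i<m. cmod (eps i) = 1) \<and> (\<forall>j<n. cmod (dlt j) = 1)}"

definition norm_G_C :: "nat \<Rightarrow> nat \<Rightarrow> (nat \<Rightarrow> nat \<Rightarrow> complex) \<Rightarrow> real" where
  "norm_G_C m n M = Sup {cmod (\<Sum>i<m. \<Sum>j<n. M i j * cinner d (x i) (y j)) | d x y.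
       (\<forall>i<m. cvnorm d (x i) = 1) \<and> (\<forall>j<n. cvnorm d (y j) = 1)}"

definition KG_C :: ereal where
  "KG_C = Inf {ereal K | K. \<forall>m n (M :: nat \<Rightarrow> nat \<Rightarrow> complex).
                 norm_G_C m n M \<le> K * norm_inf1_C m n M}"

end

theory Submission
  imports Defs
begin


lemma qsum_comp[simp]:
  "qre (qsum f A) = (\<Sum>a\<in>A. qre (f a))" "qi (qsum f A) = (\<Sum>a\<in>A. qi (f a))"
  "qj (qsum f A) = (\<Sum>a\<in>A. qj (f a))" "qk (qsum f A) = (\<Sum>a\<in>A. qk (f a))"
  by (simp_all add: qsum_def)

lemma qmult_comp[simp]:
  "qre (qmult p q) = qre p * qre q - qi p * qi q - qj p * qj q - qk p * qk q"
  "qi (qmult p q) = qre p * qi q + qi p * qre q + qj p * qk q - qk p * qj q"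
  "qj (qmult p q) = qre p * qj q - qi p * qk q + qj p * qre q + qk p * qi q"
  "qk (qmult p q) = qre p * qk q + qi p * qj q - qj p * qi q + qk p * qre q"
  by (simp_all add: qmult_def)

lemma qcnj_comp[simp]:
  "qre (qcnj q) = qre q" "qi (qcnj q) = - qi q" "qj (qcnj q) = - qj q" "qk (qcnj q) = - qk q"
  by (simp_all add: qcnj_def)

definition qsq :: "quat \<Rightarrow> real" where
  "qsq q = (qre q)^2 + (qi q)^2 + (qj q)^2 + (qk q)^2"

lemma qsq_nonneg: "qsq q \<ge> 0" by (simp add: qsq_def)

lemma qnorm_sq: "qnorm q = sqrt (qsq q)"
  by (simp add: qnorm_def qsq_def power2_eq_square)

lemma qsq_mult: "qsq (qmult p q) = qsq p * qsq q"
  by (simp add: qsq_def power2_eq_square) algebra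

lemma qnorm_mult: "qnorm (qmult p q) = qnorm p * qnorm q"
  by (simp add: qnorm_sq qsq_mult real_sqrt_mult)

lemma qnorm_cnj: "qnorm (qcnj p) = qnorm p"
  by (simp add: qnorm_sq qsq_def)

lemma qmult_assoc: "qmult (qmult p q) r = qmult p (qmult q r)"
  by (simp add: quat.expand algebra_simps)

lemma qre_le_qnorm: "qre q \<le> qnorm q"
proof -
  have "qre q \<le> sqrt ((qre q)^2)" by simp
  also have "\<dots> \<le> qnorm q" unfolding qnorm_sq qsq_def by (rule real_sqrt_le_mono) simp
  finally show ?thesis .
qed



lemma sum_lessThan_double: "(\<Sum>i<2*(m::nat). f i) = (\<Sum>i<m. f i) + (\<Sum>i<m. f (m+i))"
proof -
  have "{..<2*m} = {..<m} \<union> {m..<m+m}" by auto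
  then have "(\<Sum>i<2*m. f i) = (\<Sum>i<m. f i) + (\<Sum>i\<in>{m..<m+m}. f i)"
    by (simp add: sum.union_disjoint ivl_disj_int_one(2))
  also have "(\<Sum>i\<in>{m..<m+m}. f i) = (\<Sum>i<m. f (m+i))"
    using sum.shift_bounds_nat_ivl[of f 0 m m] by (simp add: lessThan_atLeast0 add.commute)
  finally show ?thesis .
qed

lemma Re_cinner_self: "Re (cinner d x x) = (\<Sum>k<d. (cmod (x k))^2)"
  unfolding cinner_def Re_sum
  by (intro sum.cong refl) (subst cmod_power2, simp add: power2_eq_square)

lemma cvnorm_1: "cvnorm d x = 1 \<Longrightarrow> (\<Sum>k<d. (cmod (x k))^2) = 1"
  unfolding cvnorm_def Re_cinner_self by simp

lemma cinner_bound:
  assumes "cvnorm d x = 1" "cvnorm d y = 1"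
  shows "cmod (cinner d x y) \<le> 1"
proof -
  have "cmod (cinner d x y) \<le> (\<Sum>k<d. cmod (cnj (x k) * y k))"
    unfolding cinner_def by (rule norm_sum)
  also have "\<dots> \<le> (\<Sum>k<d. ((cmod (x k))^2 + (cmod (y k))^2)/2)"
  proof (rule sum_mono)
    fix k
    have "0 \<le> (cmod (x k) - cmod (y k))^2" by simp
    then show "cmod (cnj (x k) * y k) \<le> ((cmod (x k))^2 + (cmod (y k))^2)/2"
      by (simp add: norm_mult power2_eq_square algebra_simps)
  qed
  also have "\<dots> = 1"
    using cvnorm_1[OF assms(1)] cvnorm_1[OF assms(2)]
    by (simp add: sum_divide_distrib[symmetric] sum.distrib)
  finally show ?thesis .
qed

lemma bdd_G_C: fixes m n :: nat shows "bdd_above {cmod (\<Sum>i<m. \<Sum>j<n. M i j * cinner d (x i) (y j)) | d x y.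
       (\<forall>i<m. cvnorm d (x i) = 1) \<and> (\<forall>j<n. cvnorm d (y j) = 1)}"
proof (rule bdd_aboveI, clarify)
  fix d x y assume hx: "\<forall>i<m. cvnorm d (x i) = 1" and hy: "\<forall>j<n. cvnorm d (y j) = 1"
  have "cmod (\<Sum>i<m. \<Sum>j<n. M i j * cinner d (x i) (y j)) \<le> (\<Sum>i<m. cmod (\<Sum>j<n. M i j * cinner d (x i) (y j)))"
    by (rule norm_sum)
  also have "\<dots> \<le> (\<Sum>i<m. \<Sum>j<n. cmod (M i j))"
  proof (rule sum_mono)
    fix i assume i: "i \<in> {..<m}"
    have "cmod (\<Sum>j<n. M i j * cinner d (x i) (y j)) \<le> (\<Sum>j<n. cmod (M i j * cinner d (x i) (y j)))"
      by (rule norm_sum)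
    also have "\<dots> \<le> (\<Sum>j<n. cmod (M i j))"
    proof (rule sum_mono)
      fix j assume j: "j \<in> {..<n}"
      have "cmod (cinner d (x i) (y j)) \<le> 1" using i j hx hy by (intro cinner_bound) auto
      then show "cmod (M i j * cinner d (x i) (y j)) \<le> cmod (M i j)"
        by (simp add: norm_mult mult_left_le)
    qed
    finally show "cmod (\<Sum>j<n. M i j * cinner d (x i) (y j)) \<le> (\<Sum>j<n. cmod (M i j))" .
  qed
  finally show "cmod (\<Sum>i<m. \<Sum>j<n. M i j * cinner d (x i) (y j)) \<le> (\<Sum>i<m. \<Sum>j<n. cmod (M i j))" .
qed

lemma bdd_inf1_C: fixes m n :: nat shows "bdd_above {cmod (\<Sum>i<m. \<Sum>j<n. M i j * cnj (eps i) * dlt j) | eps dlt.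
       (\<forall>i<m. cmod (eps i) = 1) \<and> (\<forall>j<n. cmod (dlt j) = 1)}"
proof (rule bdd_aboveI, clarify)
  fix eps dlt :: "nat \<Rightarrow> complex" assume he: "\<forall>i<m. cmod (eps i) = 1" and hd: "\<forall>j<n. cmod (dlt j) = 1"
  have "cmod (\<Sum>i<m. \<Sum>j<n. M i j * cnj (eps i) * dlt j) \<le> (\<Sum>i<m. cmod (\<Sum>j<n. M i j * cnj (eps i) * dlt j))"
    by (rule norm_sum)
  also have "\<dots> \<le> (\<Sum>i<m. \<Sum>j<n. cmod (M i j))"
  proof (rule sum_mono)
    fix i assume i: "i \<in> {..<m}"
    have "cmod (\<Sum>j<n. M i j * cnj (eps i) * dlt j) \<le> (\<Sum>j<n. cmod (M i j * cnj (eps i) * dlt j))"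
      by (rule norm_sum)
    also have "\<dots> = (\<Sum>j<n. cmod (M i j))"
      using i he hd by (intro sum.cong refl) (simp add: norm_mult)
    finally show "cmod (\<Sum>j<n. M i j * cnj (eps i) * dlt j) \<le> (\<Sum>j<n. cmod (M i j))" .
  qed
  finally show "cmod (\<Sum>i<m. \<Sum>j<n. M i j * cnj (eps i) * dlt j) \<le> (\<Sum>i<m. \<Sum>j<n. cmod (M i j))" .
qed



definition cq1 :: "quat \<Rightarrow> complex" where "cq1 q = Complex (qre q) (qi q)"
definition cq2 :: "quat \<Rightarrow> complex" where "cq2 q = Complex (qj q) (qk q)"

definition Z0 :: "nat \<Rightarrow> (nat \<Rightarrow> quat) \<Rightarrow> nat \<Rightarrow> complex" where
  "Z0 d v = (\<lambda>k. if k < d then cq1 (v k) else - cnj (cq2 (v (k - d))))"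
definition Z1 :: "nat \<Rightarrow> (nat \<Rightarrow> quat) \<Rightarrow> nat \<Rightarrow> complex" where
  "Z1 d v = (\<lambda>k. if k < d then cq2 (v k) else cnj (cq1 (v (k - d))))"

definition Xc :: "nat \<Rightarrow> nat \<Rightarrow> (nat \<Rightarrow> nat \<Rightarrow> quat) \<Rightarrow> nat \<Rightarrow> nat \<Rightarrow> complex" where
  "Xc m d x i = (if i < m then Z0 d (x i) else Z1 d (x (i - m)))"

definition Ac :: "nat \<Rightarrow> nat \<Rightarrow> (nat \<Rightarrow> nat \<Rightarrow> quat) \<Rightarrow> nat \<Rightarrow> nat \<Rightarrow> complex" where
  "Ac m n M i j = (if i < m then (if j < n then cq1 (M i j) else - cnj (cq2 (M i (j - n))))
                   else (if j < n then cq2 (M (i - m) j) else cnj (cq1 (M (i - m) (j - n)))))"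

lemma qinner_re: "qre (qinner d x x) = (\<Sum>k<d. qsq (x k))"
  unfolding qinner_def by (simp add: qsq_def power2_eq_square)

lemma cvnorm_Z:
  assumes "qvnorm d v = 1"
  shows "cvnorm (2*d) (Z0 d v) = 1" "cvnorm (2*d) (Z1 d v) = 1"
proof -
  have s: "(\<Sum>k<d. qsq (v k)) = 1" using assms unfolding qvnorm_def qinner_re by simp
  show "cvnorm (2*d) (Z0 d v) = 1"
    unfolding cvnorm_def Re_cinner_self sum_lessThan_double
    using s by (simp add: Z0_def cq1_def cq2_def cmod_power2 qsq_def sum.distrib[symmetric] add.assoc)
  show "cvnorm (2*d) (Z1 d v) = 1"
    unfolding cvnorm_def Re_cinner_self sum_lessThan_double
    using s by (simp add: Z1_def cq1_def cq2_def cmod_power2 qsq_def sum.distrib[symmetric] algebra_simps)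
qed

lemma qre_qsum_prod: "qre (qsum (\<lambda>(i,j). f i j) (A \<times> B)) = (\<Sum>i\<in>A. \<Sum>j\<in>B. qre (f i j))"
  by (simp add: sum.cartesian_product case_prod_beta)

lemma qmult_qsum: "qmult p (qsum g K) = qsum (\<lambda>k. qmult p (g k)) K"
  by (simp add: quat.expand sum_distrib_left sum_subtractf[symmetric] sum.distrib[symmetric])

lemma sum_pairs: "(\<Sum>p\<in>A\<times>B. g p) = (\<Sum>i\<in>A. \<Sum>j\<in>B. g (i,j))"
  by (simp add: sum.cartesian_product)

lemma G_rhs:
  "qre (qsum (\<lambda>(i,j). qmult (M i j) (qinner d (x i) (y j))) ({..<m} \<times> {..<n}))
   = (\<Sum>i<m. \<Sum>j<n. \<Sum>k<d. qre (qmult (M i j) (qmult (qcnj (x i k)) (y j k))))"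
  unfolding qsum_comp sum_pairs by (simp add: qinner_def qmult_qsum)

lemma G_identity:
  "Re (\<Sum>i<2*m. \<Sum>j<2*n. Ac m n M i j * cinner (2*d) (Xc m d x i) (Xc n d y j))
   = 2 * qre (qsum (\<lambda>(i,j). qmult (M i j) (qinner d (x i) (y j))) ({..<m} \<times> {..<n}))"
  unfolding G_rhs sum_lessThan_double cinner_def sum_distrib_left
  apply (simp add: Ac_def Xc_def Z0_def Z1_def sum_distrib_left distrib_left Re_sum sum.distrib[symmetric] sum_subtractf[symmetric])
  apply (intro sum.cong refl)
  apply (simp add: cq1_def cq2_def)
  apply (simp add: algebra_simps)
  done



definition qscale :: "real \<Rightarrow> quat \<Rightarrow> quat" where
  "qscale r q = Quat (r * qre q) (r * qi q) (r * qj q) (r * qk q)"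

lemma qscale_comp[simp]: "qre (qscale r q) = r * qre q" "qi (qscale r q) = r * qi q"
  "qj (qscale r q) = r * qj q" "qk (qscale r q) = r * qk q"
  by (simp_all add: qscale_def)

lemma qsq_scale: "qsq (qscale r q) = r^2 * qsq q"
  by (simp add: qsq_def power_mult_distrib algebra_simps)

definition Pq :: "nat \<Rightarrow> (nat \<Rightarrow> complex) \<Rightarrow> nat \<Rightarrow> quat" where
  "Pq m e i = qscale (1 / sqrt 2) (Quat (Re (e i)) (Im (e i)) (Re (e (m+i))) (Im (e (m+i))))"

lemma qnorm_Pq:
  assumes "cmod (e i) = 1" "cmod (e (m+i)) = 1"
  shows "qnorm (Pq m e i) = 1"
proof -
  have "(Re (e i))^2 + (Im (e i))^2 = 1" "(Re (e (m+i)))^2 + (Im (e (m+i)))^2 = 1"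
    using assms by (simp_all add: cmod_power2[symmetric])
  then show ?thesis unfolding qnorm_sq Pq_def qsq_scale
    by (simp add: qsq_def power_divide)
qed

lemma inf1_identity:
  "Re (\<Sum>i<2*m. \<Sum>j<2*n. Ac m n M i j * cnj (e i) * g j)
   = 2 * qre (qsum (\<lambda>(i,j). qmult (qmult (M i j) (qcnj (Pq m e i))) (Pq n g j)) ({..<m} \<times> {..<n}))"
proof -
  have r: "2 * qre (qmult (qmult X (qcnj (qscale (1 / sqrt 2) P))) (qscale (1 / sqrt 2) Q))
        = qre (qmult (qmult X (qcnj P)) Q)" for X P Q
  proof -
    have e: "2 * qre (qmult (qmult X (qcnj (qscale c P))) (qscale c Q))
        = (2 * c * c) * qre (qmult (qmult X (qcnj P)) Q)" for c
      by (simp add: algebra_simps)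
    have "2 * (1 / sqrt 2) * (1 / sqrt 2) = (1::real)" by simp
    then show ?thesis unfolding e[of "1 / sqrt 2"] by simp
  qed
  define P0 where "P0 = (\<lambda>(e::nat\<Rightarrow>complex) m i. Quat (Re (e i)) (Im (e i)) (Re (e (m+i))) (Im (e (m+i))))"
  have Pq: "Pq m e i = qscale (1 / sqrt 2) (P0 e m i)" for m e i unfolding Pq_def P0_def by simp
  have "2 * qre (qsum (\<lambda>(i,j). qmult (qmult (M i j) (qcnj (Pq m e i))) (Pq n g j)) ({..<m} \<times> {..<n}))
      = (\<Sum>i<m. \<Sum>j<n. qre (qmult (qmult (M i j) (qcnj (P0 e m i))) (P0 g n j)))"
    unfolding qsum_comp sum_pairs sum_distrib_left by (simp only: Pq r prod.case)
  then show ?thesis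
    unfolding sum_lessThan_double
    apply (simp add: P0_def)
    apply (simp add: Ac_def sum_distrib_left distrib_left Re_sum sum.distrib[symmetric] sum_subtractf[symmetric])
    apply (intro sum.cong refl)
    apply (simp add: cq1_def cq2_def)
    apply (simp add: algebra_simps)
    done
qed



lemma comp_le_qnorm: "\<bar>qre q\<bar> \<le> qnorm q" "\<bar>qi q\<bar> \<le> qnorm q" "\<bar>qj q\<bar> \<le> qnorm q" "\<bar>qk q\<bar> \<le> qnorm q"
  unfolding qnorm_sq qsq_def
  by (rule real_le_rsqrt; simp)+

lemma qnorm_le_l1: "qnorm q \<le> \<bar>qre q\<bar> + \<bar>qi q\<bar> + \<bar>qj q\<bar> + \<bar>qk q\<bar>"
  unfolding qnorm_sq qsq_def
proof (rule real_le_lsqrt)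
  show "(qre q)\<^sup>2 + (qi q)\<^sup>2 + (qj q)\<^sup>2 + (qk q)\<^sup>2 \<le> (\<bar>qre q\<bar> + \<bar>qi q\<bar> + \<bar>qj q\<bar> + \<bar>qk q\<bar>)\<^sup>2"
    by (simp add: power2_eq_square algebra_simps)
qed simp

lemma qnorm_qsum_le: "qnorm (qsum f A) \<le> 4 * (\<Sum>a\<in>A. qnorm (f a))"
proof -
  have "qnorm (qsum f A) \<le> \<bar>qre (qsum f A)\<bar> + \<bar>qi (qsum f A)\<bar> + \<bar>qj (qsum f A)\<bar> + \<bar>qk (qsum f A)\<bar>"
    by (rule qnorm_le_l1)
  also have "\<dots> \<le> (\<Sum>a\<in>A. qnorm (f a)) + (\<Sum>a\<in>A. qnorm (f a)) + (\<Sum>a\<in>A. qnorm (f a)) + (\<Sum>a\<in>A. qnorm (f a))"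
    unfolding qsum_comp
    by (intro add_mono order_trans[OF sum_abs] sum_mono comp_le_qnorm)
  finally show ?thesis by simp
qed

lemma bdd_inf1_H: fixes m n :: nat shows "bdd_above {qnorm (qsum (\<lambda>(i,j). qmult (qmult (M i j) (qcnj (eps i))) (dlt j))
                                    ({..<m} \<times> {..<n})) | eps dlt.
       (\<forall>i<m. qnorm (eps i) = 1) \<and> (\<forall>j<n. qnorm (dlt j) = 1)}"
proof (rule bdd_aboveI, clarify)
  fix eps dlt :: "nat \<Rightarrow> quat" assume he: "\<forall>i<m. qnorm (eps i) = 1" and hd: "\<forall>j<n. qnorm (dlt j) = 1"
  have "qnorm (qsum (\<lambda>(i,j). qmult (qmult (M i j) (qcnj (eps i))) (dlt j)) ({..<m} \<times> {..<n}))
     \<le> 4 * (\<Sum>p\<in>{..<m} \<times> {..<n}. qnorm ((\<lambda>(i,j). qmult (qmult (M i j) (qcnj (eps i))) (dlt j)) p))"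
    by (rule qnorm_qsum_le)
  also have "\<dots> = 4 * (\<Sum>p\<in>{..<m} \<times> {..<n}. qnorm (M (fst p) (snd p)))"
    using he hd by (intro arg_cong[where f="\<lambda>t. 4 * t"] sum.cong refl) (auto simp: qnorm_mult qnorm_cnj)
  finally show "qnorm (qsum (\<lambda>(i,j). qmult (qmult (M i j) (qcnj (eps i))) (dlt j)) ({..<m} \<times> {..<n}))
     \<le> 4 * (\<Sum>p\<in>{..<m} \<times> {..<n}. qnorm (M (fst p) (snd p)))" .
qed

lemma inf1_C_bound: "norm_inf1_C (2*m) (2*n) (Ac m n M) \<le> 2 * norm_inf1_H m n M"
  unfolding norm_inf1_C_def
proof (rule cSup_least)
  show "{cmod (\<Sum>i<2*m. \<Sum>j<2*n. Ac m n M i j * cnj (eps i) * dlt j) | eps dlt.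
       (\<forall>i<2*m. cmod (eps i) = 1) \<and> (\<forall>j<2*n. cmod (dlt j) = 1)} \<noteq> {}"
    by (rule ccontr) (auto dest!: spec[of _ "\<lambda>_. 1"])
next
  fix z assume "z \<in> {cmod (\<Sum>i<2*m. \<Sum>j<2*n. Ac m n M i j * cnj (eps i) * dlt j) | eps dlt.
       (\<forall>i<2*m. cmod (eps i) = 1) \<and> (\<forall>j<2*n. cmod (dlt j) = 1)}"
  then obtain e g where z: "z = cmod (\<Sum>i<2*m. \<Sum>j<2*n. Ac m n M i j * cnj (e i) * g j)"
    and he: "\<forall>i<2*m. cmod (e i) = 1" and hg: "\<forall>j<2*n. cmod (g j) = 1" by blast
  define w where "w = (\<Sum>i<2*m. \<Sum>j<2*n. Ac m n M i j * cnj (e i) * g j)"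
  define u where "u = (if w = 0 then 1 else cnj w / cmod w)"
  have u1: "cmod u = 1" unfolding u_def by (simp add: norm_divide)
  have wu: "w * u = of_real (cmod w)"
    unfolding u_def by (simp add: complex_norm_square[symmetric] power2_eq_square divide_simps)
  define g' where "g' = (\<lambda>j. g j * u)"
  have hg': "\<forall>j<2*n. cmod (g' j) = 1" using hg u1 by (simp add: g'_def norm_mult)
  have "(\<Sum>i<2*m. \<Sum>j<2*n. Ac m n M i j * cnj (e i) * g' j) = w * u"
    unfolding w_def g'_def sum_distrib_right by (simp add: mult.assoc)
  then have "z = Re (\<Sum>i<2*m. \<Sum>j<2*n. Ac m n M i j * cnj (e i) * g' j)"
    using z wu w_def by simp
  also have "\<dots> = 2 * qre (qsum (\<lambda>(i,j). qmult (qmult (M i j) (qcnj (Pq m e i))) (Pq n g' j)) ({..<m} \<times> {..<n}))"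
    by (rule inf1_identity)
  also have "\<dots> \<le> 2 * qnorm (qsum (\<lambda>(i,j). qmult (qmult (M i j) (qcnj (Pq m e i))) (Pq n g' j)) ({..<m} \<times> {..<n}))"
    by (rule mult_left_mono[OF qre_le_qnorm]) simp
  also have "\<dots> \<le> 2 * norm_inf1_H m n M"
    unfolding norm_inf1_H_def
  proof (intro mult_left_mono cSup_upper bdd_inf1_H)
    show "qnorm (qsum (\<lambda>(i,j). qmult (qmult (M i j) (qcnj (Pq m e i))) (Pq n g' j)) ({..<m} \<times> {..<n}))
      \<in> {qnorm (qsum (\<lambda>(i,j). qmult (qmult (M i j) (qcnj (eps i))) (dlt j)) ({..<m} \<times> {..<n})) | eps dlt.
       (\<forall>i<m. qnorm (eps i) = 1) \<and> (\<forall>j<n. qnorm (dlt j) = 1)}"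
    proof (intro CollectI exI conjI allI impI)
      fix i assume "i < m" then show "qnorm (Pq m e i) = 1" using he by (intro qnorm_Pq) auto
    next
      fix j assume "j < n" then show "qnorm (Pq n g' j) = 1" using hg' by (intro qnorm_Pq) auto
    qed (rule refl)
  qed simp
  finally show "z \<le> 2 * norm_inf1_H m n M" .
qed



lemma core:
  assumes hK: "\<forall>m n M. norm_G_C m n M \<le> K * norm_inf1_C m n M" and K0: "K \<ge> 0"
    and hx: "\<forall>i<m. qvnorm d (x i) = 1" and hy: "\<forall>j<n. qvnorm d (y j) = 1"
  shows "qre (qsum (\<lambda>(i,j). qmult (M i j) (qinner d (x i) (y j))) ({..<m} \<times> {..<n}))
         \<le> K * norm_inf1_H m n M"
proof -
  let ?z = "(\<Sum>i<2*m. \<Sum>j<2*n. Ac m n M i j * cinner (2*d) (Xc m d x i) (Xc n d y j))"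
  have ux: "\<forall>i<2*m. cvnorm (2*d) (Xc m d x i) = 1"
    using hx cvnorm_Z by (auto simp: Xc_def)
  have uy: "\<forall>j<2*n. cvnorm (2*d) (Xc n d y j) = 1"
    using hy cvnorm_Z by (auto simp: Xc_def)
  have "2 * qre (qsum (\<lambda>(i,j). qmult (M i j) (qinner d (x i) (y j))) ({..<m} \<times> {..<n})) = Re ?z"
    by (rule G_identity[symmetric])
  also have "\<dots> \<le> cmod ?z" by (rule complex_Re_le_cmod)
  also have "\<dots> \<le> norm_G_C (2*m) (2*n) (Ac m n M)"
    unfolding norm_G_C_def
    by (rule cSup_upper[OF _ bdd_G_C]) (use ux uy in blast)
  also have "\<dots> \<le> K * norm_inf1_C (2*m) (2*n) (Ac m n M)" using hK by blast
  also have "\<dots> \<le> K * (2 * norm_inf1_H m n M)"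
    by (rule mult_left_mono[OF inf1_C_bound K0])
  finally show ?thesis by simp
qed

lemma K_ge_1:
  assumes hK: "\<forall>m n M. norm_G_C m n M \<le> K * norm_inf1_C m n M"
  shows "K \<ge> 1"
proof -
  let ?M = "\<lambda>(_::nat) (_::nat). (1::complex)"
  have c1: "cvnorm 1 (\<lambda>_. 1) = 1" by (simp add: cvnorm_def cinner_def)
  have "1 \<le> norm_G_C 1 1 ?M"
    unfolding norm_G_C_def
  proof (rule cSup_upper[OF _ bdd_G_C])
    show "1 \<in> {cmod (\<Sum>i<1. \<Sum>j<1. ?M i j * cinner d (x i) (y j)) | d x y.
       (\<forall>i<1. cvnorm d (x i) = 1) \<and> (\<forall>j<1. cvnorm d (y j) = 1)}"
      using c1 by (intro CollectI exI[of _ 1] exI[of _ "\<lambda>_ _. 1"]) (simp add: cinner_def)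
  qed
  moreover have "1 \<le> norm_inf1_C 1 1 ?M"
    unfolding norm_inf1_C_def
  proof (rule cSup_upper[OF _ bdd_inf1_C])
    show "1 \<in> {cmod (\<Sum>i<1. \<Sum>j<1. ?M i j * cnj (eps i) * dlt j) | eps dlt.
       (\<forall>i<1. cmod (eps i) = 1) \<and> (\<forall>j<1. cmod (dlt j) = 1)}"
      by (intro CollectI exI[of _ "\<lambda>_. 1"]) simp
  qed
  moreover have "norm_inf1_C 1 1 ?M \<le> 1"
    unfolding norm_inf1_C_def
    by (rule cSup_least) (auto intro!: exI[of _ "\<lambda>_. 1"] simp: norm_mult)
  ultimately have "1 \<le> K * 1" using hK[rule_format, of 1 1 ?M] by simp
  then show ?thesis by simp
qed


lemma qsum_lmult: "qsum (\<lambda>(i,j). qmult (qmult u (M i j)) (f i j)) A = qmult u (qsum (\<lambda>(i,j). qmult (M i j) (f i j)) A)"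
proof -
  have "(\<lambda>(i,j). qmult (qmult u (M i j)) (f i j)) = (\<lambda>p. qmult u ((\<lambda>(i,j). qmult (M i j) (f i j)) p))"
    by (rule ext, case_tac p) (simp only: qmult_assoc prod.case)
  then show ?thesis by (simp only: qmult_qsum)
qed

lemma qsum_lmult2: "qsum (\<lambda>(i,j). qmult (qmult (qmult u (M i j)) (e i)) (f j)) A
   = qmult u (qsum (\<lambda>(i,j). qmult (qmult (M i j) (e i)) (f j)) A)"
proof -
  have "(\<lambda>(i,j). qmult (qmult (qmult u (M i j)) (e i)) (f j)) = (\<lambda>p. qmult u ((\<lambda>(i,j). qmult (qmult (M i j) (e i)) (f j)) p))"
    by (rule ext, case_tac p) (simp only: qmult_assoc prod.case)
  then show ?thesis by (simp only: qmult_qsum)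
qed

lemma q1_norm: "qnorm (Quat 1 0 0 0) = 1" by (simp add: qnorm_def)

lemma inf1_H_rot:
  assumes "qnorm u = 1"
  shows "norm_inf1_H m n (\<lambda>i j. qmult u (M i j)) \<le> norm_inf1_H m n M"
  unfolding norm_inf1_H_def
proof (rule cSup_least)
  show "{qnorm (qsum (\<lambda>(i,j). qmult (qmult (qmult u (M i j)) (qcnj (eps i))) (dlt j)) ({..<m} \<times> {..<n})) | eps dlt.
       (\<forall>i<m. qnorm (eps i) = 1) \<and> (\<forall>j<n. qnorm (dlt j) = 1)} \<noteq> {}"
  proof -
    have "qnorm (qsum (\<lambda>(i,j). qmult (qmult (qmult u (M i j)) (qcnj ((\<lambda>_. Quat 1 0 0 0) i))) ((\<lambda>_. Quat 1 0 0 0) j)) ({..<m} \<times> {..<n}))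
       \<in> {qnorm (qsum (\<lambda>(i,j). qmult (qmult (qmult u (M i j)) (qcnj (eps i))) (dlt j)) ({..<m} \<times> {..<n})) | eps dlt.
       (\<forall>i<m. qnorm (eps i) = 1) \<and> (\<forall>j<n. qnorm (dlt j) = 1)}"
      by (intro CollectI exI[of _ "\<lambda>_. Quat 1 0 0 0"] conjI refl allI impI q1_norm)
    then show ?thesis by blast
  qed
next
  fix z assume "z \<in> {qnorm (qsum (\<lambda>(i,j). qmult (qmult (qmult u (M i j)) (qcnj (eps i))) (dlt j)) ({..<m} \<times> {..<n})) | eps dlt.
       (\<forall>i<m. qnorm (eps i) = 1) \<and> (\<forall>j<n. qnorm (dlt j) = 1)}"
  then obtain eps dlt where z: "z = qnorm (qsum (\<lambda>(i,j). qmult (qmult (qmult u (M i j)) (qcnj (eps i))) (dlt j)) ({..<m} \<times> {..<n}))"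
    and he: "\<forall>i<m. qnorm (eps i) = 1" and hd: "\<forall>j<n. qnorm (dlt j) = 1" by blast
  have "z = qnorm (qsum (\<lambda>(i,j). qmult (qmult (M i j) (qcnj (eps i))) (dlt j)) ({..<m} \<times> {..<n}))"
    unfolding z qsum_lmult2 qnorm_mult assms by (rule mult_1)
  also have "\<dots> \<le> Sup {qnorm (qsum (\<lambda>(i,j). qmult (qmult (M i j) (qcnj (eps i))) (dlt j)) ({..<m} \<times> {..<n})) | eps dlt.
       (\<forall>i<m. qnorm (eps i) = 1) \<and> (\<forall>j<n. qnorm (dlt j) = 1)}"
    by (rule cSup_upper[OF _ bdd_inf1_H]) (use he hd in blast)
  finally show "z \<le> Sup {qnorm (qsum (\<lambda>(i,j). qmult (qmult (M i j) (qcnj (eps i))) (dlt j)) ({..<m} \<times> {..<n})) | eps dlt.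
       (\<forall>i<m. qnorm (eps i) = 1) \<and> (\<forall>j<n. qnorm (dlt j) = 1)}" .
qed

lemma rotation:
  obtains u where "qnorm u = 1" "qre (qmult u S) = qnorm S"
proof (cases "qsq S = 0")
  case True
  then have "qre S = 0" "qi S = 0" "qj S = 0" "qk S = 0"
    by (simp_all add: qsq_def add_nonneg_eq_0_iff)
  moreover have "qnorm S = 0" using True by (simp add: qnorm_sq)
  ultimately show ?thesis
    by (intro that[of "Quat 1 0 0 0"] q1_norm) simp
next
  case False
  then have pos: "qsq S > 0" using qsq_nonneg[of S] by simp
  define u where "u = qscale (1 / qnorm S) (qcnj S)"
  have "qsq u = 1" unfolding u_def qsq_scale qnorm_sq using pos
    by (simp add: qsq_def power_divide)
  moreover have "qre (qmult u S) = qnorm S"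
  proof -
    have "qre (qmult u S) = qsq S / qnorm S" unfolding u_def
      by (simp add: qsq_def power2_eq_square algebra_simps add_divide_distrib)
    also have "\<dots> = qnorm S" unfolding qnorm_sq using pos
      by (metis less_imp_le real_div_sqrt)
    finally show ?thesis .
  qed
  ultimately show ?thesis by (intro that) (simp_all add: qnorm_sq)
qed

lemma G_H_bound:
  assumes hK: "\<forall>m n M. norm_G_C m n M \<le> K * norm_inf1_C m n M"
  shows "norm_G_H m n M \<le> K * norm_inf1_H m n M"
  unfolding norm_G_H_def
proof (rule cSup_least)
  have q: "qvnorm 1 (\<lambda>_. Quat 1 0 0 0) = 1" by (simp add: qvnorm_def qinner_def)
  show "{qnorm (qsum (\<lambda>(i,j). qmult (M i j) (qinner d (x i) (y j))) ({..<m} \<times> {..<n})) | d x y.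
       (\<forall>i<m. qvnorm d (x i) = 1) \<and> (\<forall>j<n. qvnorm d (y j) = 1)} \<noteq> {}"
  proof -
    have "qnorm (qsum (\<lambda>(i,j). qmult (M i j) (qinner 1 ((\<lambda>_ _. Quat 1 0 0 0) i) ((\<lambda>_ _. Quat 1 0 0 0) j))) ({..<m} \<times> {..<n}))
      \<in> {qnorm (qsum (\<lambda>(i,j). qmult (M i j) (qinner d (x i) (y j))) ({..<m} \<times> {..<n})) | d x y.
       (\<forall>i<m. qvnorm d (x i) = 1) \<and> (\<forall>j<n. qvnorm d (y j) = 1)}"
      by (intro CollectI exI[of _ "1::nat"] exI[of _ "\<lambda>_ _. Quat 1 0 0 0"] conjI refl allI impI \<open>qvnorm 1 (\<lambda>_. Quat 1 0 0 0) = 1\<close>)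
    then show ?thesis by blast
  qed
next
  have K0: "K \<ge> 0" using K_ge_1[OF hK] by simp
  fix z assume "z \<in> {qnorm (qsum (\<lambda>(i,j). qmult (M i j) (qinner d (x i) (y j))) ({..<m} \<times> {..<n})) | d x y.
       (\<forall>i<m. qvnorm d (x i) = 1) \<and> (\<forall>j<n. qvnorm d (y j) = 1)}"
  then obtain d x y where z: "z = qnorm (qsum (\<lambda>(i,j). qmult (M i j) (qinner d (x i) (y j))) ({..<m} \<times> {..<n}))"
    and hx: "\<forall>i<m. qvnorm d (x i) = 1" and hy: "\<forall>j<n. qvnorm d (y j) = 1" by blast
  obtain u where u1: "qnorm u = 1"
    and uS0: "qre (qmult u (qsum (\<lambda>(i,j). qmult (M i j) (qinner d (x i) (y j))) ({..<m} \<times> {..<n})))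
       = qnorm (qsum (\<lambda>(i,j). qmult (M i j) (qinner d (x i) (y j))) ({..<m} \<times> {..<n}))"
    by (rule rotation)
  have uS: "qre (qmult u (qsum (\<lambda>(i,j). qmult (M i j) (qinner d (x i) (y j))) ({..<m} \<times> {..<n}))) = z"
    using uS0 z by simp
  have "z = qre (qsum (\<lambda>(i,j). qmult ((\<lambda>i j. qmult u (M i j)) i j) (qinner d (x i) (y j))) ({..<m} \<times> {..<n}))"
    using uS by (simp only: qsum_lmult)
  also have "\<dots> \<le> K * norm_inf1_H m n (\<lambda>i j. qmult u (M i j))"
    by (rule core[OF hK K0 hx hy])
  also have "\<dots> \<le> K * norm_inf1_H m n M"
    by (rule mult_left_mono[OF inf1_H_rot[OF u1] K0])
  finally show "z \<le> K * norm_inf1_H m n M" .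
qed

theorem mainTheorem1:
  shows "KG_H \<le> KG_C"
  unfolding KG_H_def KG_C_def
  by (rule Inf_superset_mono) (use G_H_bound in blast)


end
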